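(* Let $G$ be a PMCFG and $\mathcal{M}(G)$ the automaton with respect to $G$. If $G$ is a $k$-MCFG, then $\mathcal{M}(G)$ is $k$-restricted.
   Context: Composition functions. Fix variables $x_i^j$ ($i,j\in\mathbb{N}_+$). For $s_1,\dots,s_\ell,s\in\mathbb{N}_+$ a composition function of sort $(s_1\cdots s_\ell,s)$ over $\Sigma$ is given by a tuple $[u_1,\dots,u_s]$ with each $u_i$ a string over $\Sigma\cup\{x_i^j : i\in[\ell], j\in[s_i]\}$; it maps $((w_1^1,\dots,w_1^{s_1}),\dots,(w_\ell^1,\dots,w_\ell^{s_\ell}))$ to the $s$-tuple obtained from $(u_1,\dots,u_s)$ by replacing each $x_i^j$ by $w_i^j$. Fan-out is $s$; linear means every variable occurs at most once in $u_1\cdots u_s$. PMCFG/MCFG. A PMCFG is $G=(N,\Sigma,I,R)$ with $N$ a finite set of nonterminals each with a sort in $\mathbb{N}_+$, $I$ a set of nonterminals of sort 1, and $R$ a finite set of rules $A\to f(A_1,\dots,A_\ell)$ where $f$ has sort $(s_1\cdots s_\ell,s)$, $A$ has sort $s$, $A_i$ has sort $s_i$. An MCFG has only linear composition functions; a $k$-MCFG is an MCFG with all rules of fan-out at most $k$. Tree stacks and TSA. A tree stack over $\Gamma$ ($@\notin\Gamma$) is $(\xi,\rho)$ with $\xi:\mathbb{N}_+^*\rightharpoonup\Gamma\cup\{@\}$ of finite prefix-closed domain, $\xi(\varepsilon)=@$, labels elsewhere in $\Gamma$, and $\rho\in\mathrm{dom}(\xi)$. Predicates: $\mathrm{bottom}$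 ($\rho=\varepsilon$), $\mathrm{equals}(\gamma)$ ($\xi(\rho)=\gamma$), and "all". Instructions: $\mathrm{id}$; $\mathrm{push}_n(\gamma)$ (defined iff $\rho n\notin\mathrm{dom}(\xi)$, result $(\xi[\rho n\mapsto\gamma],\rho n)$); $\mathrm{up}_n$ (defined iff $\rho n\in\mathrm{dom}(\xi)$, result $(\xi,\rho n)$); $\mathrm{down}$ ($(\xi,\rho n)\mapsto(\xi,\rho)$); $\mathrm{set}(\gamma)$ (defined iff $\rho\ne\varepsilon$, result $(\xi[\rho\mapsto\gamma],\rho)$). Initial tree stack $(\{\varepsilon\mapsto@\},\varepsilon)$. A TSA has finite states, initial state, final states and finitely many transitions $(q,\omega,p,f,q')$ ($\omega\in\Sigma\cup\{\varepsilon\}$); $(q,c,w)\vdash_\tau(q',c',w')$ iff $w=\omega w'$, $c\in p$, $f(c)=c'$ defined. A valid run goes from (initial state, initial tree stack, $w$) to (final state, some tree stack, $\varepsilon$) and recognises $w$. $k$-restricted: for every valid run and every position $\rho$, the number of transitions in the run having a $\mathrm{push}$- or $\mathrm{up}$-instruction after which the stack pointer equals $\rho$ is at most $k$. The automaton $\mathcal{M}(G)$ with respect to a PMCFG $G=(N,\Sigma,I,R)$. Let $\bar R=\{\langle r,i,j\rangle : r=A\to[u_1,\dots,u_s](A_1,\dots,A_\ell)\in R, i\in[s], j\in\{0,\dots,|u_i|\}\}$ and $\Box$ a fresh symbol. Stack alphabet $\Gamma=\{\Box\}\cup R\cup\bar R$; states $Q=\{q,q_+,q_- : q\in\bar R\cup\{\Box\}\}$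 (with $q_+,q_-$ fresh copies); initial state $\Box$; final states $\{\Box\}$. The transition set is the smallest set containing: (i) for every $r=S\to[u](A_1,\dots,A_\ell)\in R$ with $S\in I$: $(\Box,\varepsilon,\text{all},\mathrm{push}_1(\Box),\langle r,1,0\rangle)$, $(\langle r,1,|u|\rangle,\varepsilon,\mathrm{equals}(\Box),\mathrm{set}(r),\Box_-)$, and $(\Box_-,\varepsilon,\text{all},\mathrm{down},\Box)$; (ii) for every $r=A\to[u_1,\dots,u_s](A_1,\dots,A_\ell)\in R$, $i\in[s]$, $j\in[|u_i|]$ such that the $j$-th symbol of $u_i$ is $\sigma\in\Sigma$: $(\langle r,i,j-1\rangle,\sigma,\text{all},\mathrm{id},\langle r,i,j\rangle)$; (iii) for every $r=A\to[u_1,\dots,u_s](A_1,\dots,A_\ell)\in R$, $i\in[s]$, $j\in[|u_i|]$, $\kappa\in[\ell]$, $r'=A_\kappa\to[v_1,\dots,v_{s'}](B_1,\dots,B_{\ell'})\in R$, $m\in[s']$ such that the $j$-th symbol of $u_i$ is $x_\kappa^m$, writing $q=\langle r,i,j\rangle$: $(\langle r,i,j-1\rangle,\varepsilon,\text{all},\mathrm{push}_\kappa(q),\langle r',m,0\rangle)$, $(\langle r,i,j-1\rangle,\varepsilon,\text{all},\mathrm{up}_\kappa,q_+)$, $(q_+,\varepsilon,\mathrm{equals}(r'),\mathrm{set}(q),\langle r',m,0\rangle)$, $(\langle r',m,|v_m|\rangle,\varepsilon,\mathrm{equals}(q),\mathrm{set}(r'),q_-)$, and $(q_-,\varepsilon,\text{all},\mathrm{down},q)$.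 *)

theory Defs
  imports Main
begin

text \<open>Symbols of composition functions: a terminal, or a variable V i j standing for x_i^j
  (indices are 1-based, i,j >= 1).\<close>
datatype 't sym = T 't | V nat nat

text \<open>A rule A -> [u_1,...,u_s](A_1,...,A_l); the components u_1..u_s are the list elements.\<close>
datatype ('n, 't) rule = Rule (lhs: 'n) (comp: "'t sym list list") (rhs: "'n list")

record ('n, 't) pmcfg =
  nts      :: "'n set"
  srt      :: "'n \<Rightarrow> nat"
  terms    :: "'t set"
  initials :: "'n set"
  rules    :: "('n, 't) rule set"

definition is_var :: "'t sym \<Rightarrow> bool" where
  "is_var a = (case a of V _ _ \<Rightarrow> True | T _ \<Rightarrow> False)"

definition is_pmcfg :: "('n, 't) pmcfg \<Rightarrow> bool" where
  "is_pmcfg G \<longleftrightarrow>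
     finite (nts G) \<and> finite (terms G) \<and> finite (rules G) \<and>
     (\<forall>A \<in> nts G. 1 \<le> srt G A) \<and>
     initials G \<subseteq> nts G \<and> (\<forall>S \<in> initials G. srt G S = 1) \<and>
     (\<forall>r \<in> rules G.
        lhs r \<in> nts G \<and> set (rhs r) \<subseteq> nts G \<and>
        length (comp r) = srt G (lhs r) \<and>
        (\<forall>u \<in> set (comp r). \<forall>a \<in> set u.
           (case a of
              T \<sigma> \<Rightarrow> \<sigma> \<in> terms G
            | V i j \<Rightarrow> 1 \<le> i \<and> i \<le> length (rhs r) \<and>
                       1 \<le> j \<and> j \<le> srt G (rhs r ! (i - 1)))))"

definition linear_rule :: "('n, 't) rule \<Rightarrow> bool" where
  "linear_rule r \<longleftrightarrow> distinct (filter is_var (concat (comp r)))"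

text \<open>k-MCFG: an MCFG (all composition functions linear) whose rules have fan-out at most k
  (the fan-out of A -> [u_1,...,u_s](...) being s).\<close>
definition is_kMCFG :: "nat \<Rightarrow> ('n, 't) pmcfg \<Rightarrow> bool" where
  "is_kMCFG k G \<longleftrightarrow> is_pmcfg G \<and>
     (\<forall>r \<in> rules G. linear_rule r \<and> length (comp r) \<le> k)"

datatype 'g lab = At | Lab 'g

type_synonym 'g tstack = "(nat list \<Rightarrow> 'g lab option) \<times> nat list"

datatype 'g pred = Bottom | Equals 'g | All

datatype 'g instr = IdI | Push nat 'g | Up nat | Down | SetI 'g

definition init_ts :: "'g tstack" where
  "init_ts = (Map.empty([] \<mapsto> At), [])"

definition holds :: "'g pred \<Rightarrow> 'g tstack \<Rightarrow> bool" where
  "holds p c = (case p of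
      Bottom \<Rightarrow> snd c = []
    | Equals \<gamma> \<Rightarrow> fst c (snd c) = Some (Lab \<gamma>)
    | All \<Rightarrow> True)"

fun apply_instr :: "'g instr \<Rightarrow> 'g tstack \<Rightarrow> 'g tstack option" where
  "apply_instr IdI (\<xi>, \<rho>) = Some (\<xi>, \<rho>)"
| "apply_instr (Push n \<gamma>) (\<xi>, \<rho>) =
     (if \<rho> @ [n] \<notin> dom \<xi> then Some (\<xi>(\<rho> @ [n] \<mapsto> Lab \<gamma>), \<rho> @ [n]) else None)"
| "apply_instr (Up n) (\<xi>, \<rho>) =
     (if \<rho> @ [n] \<in> dom \<xi> then Some (\<xi>, \<rho> @ [n]) else None)"
| "apply_instr Down (\<xi>, \<rho>) = (if \<rho> \<noteq> [] then Some (\<xi>, butlast \<rho>) else None)"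
| "apply_instr (SetI \<gamma>) (\<xi>, \<rho>) = (if \<rho> \<noteq> [] then Some (\<xi>(\<rho> \<mapsto> Lab \<gamma>), \<rho>) else None)"

definition is_push_or_up :: "'g instr \<Rightarrow> bool" where
  "is_push_or_up f = (case f of Push _ _ \<Rightarrow> True | Up _ \<Rightarrow> True | _ \<Rightarrow> False)"

text \<open>A transition (q, omega, p, f, q'); omega = None stands for epsilon.\<close>
type_synonym ('q, 'a, 'g) transition = "'q \<times> 'a option \<times> 'g pred \<times> 'g instr \<times> 'q"

record ('q, 'a, 'g) tsa =
  states  :: "'q set"
  inp     :: "'a set"
  stk     :: "'g set"
  initial :: "'q"
  finals  :: "'q set"
  trans   :: "('q, 'a, 'g) transition set"

type_synonym ('q, 'a, 'g) config = "'q \<times> 'g tstack \<times> 'a list"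

definition step :: "('q, 'a, 'g) transition \<Rightarrow> ('q, 'a, 'g) config \<Rightarrow> ('q, 'a, 'g) config \<Rightarrow> bool" where
  "step \<tau> C C' \<longleftrightarrow>
     (case \<tau> of (q, \<omega>, p, f, q') \<Rightarrow>
       (case C of (q1, c, w) \<Rightarrow> case C' of (q2, c', w') \<Rightarrow>
          q1 = q \<and> q2 = q' \<and> w = (case \<omega> of None \<Rightarrow> w' | Some a \<Rightarrow> a # w') \<and>
          holds p c \<and> apply_instr f c = Some c'))"

definition valid_run :: "('q, 'a, 'g) tsa \<Rightarrow> ('q, 'a, 'g) transition list \<Rightarrow> ('q, 'a, 'g) config list \<Rightarrow> bool" where
  "valid_run A ts cs \<longleftrightarrow>
     length cs = Suc (length ts) \<and>
     (\<forall>i < length ts. ts ! i \<in> trans A \<and> step (ts ! i) (cs ! i) (cs ! Suc i)) \<and>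
     fst (cs ! 0) = initial A \<and> fst (snd (cs ! 0)) = init_ts \<and>
     fst (last cs) \<in> finals A \<and> snd (snd (last cs)) = []"

definition instr_of :: "('q, 'a, 'g) transition \<Rightarrow> 'g instr" where
  "instr_of \<tau> = fst (snd (snd (snd \<tau>)))"

definition k_restricted :: "nat \<Rightarrow> ('q, 'a, 'g) tsa \<Rightarrow> bool" where
  "k_restricted k A \<longleftrightarrow>
     (\<forall>ts cs. valid_run A ts cs \<longrightarrow>
        (\<forall>\<rho>. card {i. i < length ts \<and> is_push_or_up (instr_of (ts ! i)) \<and>
                       snd (fst (snd (cs ! Suc i))) = \<rho>} \<le> k))"

text \<open>Items <r,i,j> (i 1-based, j 0-based) together with the fresh symbol Box.\<close>
datatype ('n, 't) item = IBox | IR "('n, 't) rule" nat nat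

datatype ('n, 't) gam = GI "('n, 't) item" | GR "('n, 't) rule"

datatype ('n, 't) st = St "('n, 't) item" | StP "('n, 't) item" | StM "('n, 't) item"

definition Rbar :: "('n, 't) pmcfg \<Rightarrow> ('n, 't) item set" where
  "Rbar G = {IR r i j | r i j. r \<in> rules G \<and> 1 \<le> i \<and> i \<le> length (comp r) \<and>
                              j \<le> length (comp r ! (i - 1))}"

inductive_set transM :: "('n, 't) pmcfg \<Rightarrow> (('n, 't) st, 't, ('n, 't) gam) transition set"
  for G :: "('n, 't) pmcfg" where
  init1: "\<lbrakk>r \<in> rules G; r = Rule S [u] As; S \<in> initials G\<rbrakk>
     \<Longrightarrow> (St IBox, None, All, Push 1 (GI IBox), St (IR r 1 0)) \<in> transM G"
| init2: "\<lbrakk>r \<in> rules G; r = Rule S [u] As; S \<in> initials G\<rbrakk>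
     \<Longrightarrow> (St (IR r 1 (length u)), None, Equals (GI IBox), SetI (GR r), StM IBox) \<in> transM G"
| init3: "\<lbrakk>r \<in> rules G; r = Rule S [u] As; S \<in> initials G\<rbrakk>
     \<Longrightarrow> (StM IBox, None, All, Down, St IBox) \<in> transM G"
| read: "\<lbrakk>r \<in> rules G; r = Rule A us As; 1 \<le> i; i \<le> length us; 1 \<le> j;
          j \<le> length (us ! (i - 1)); us ! (i - 1) ! (j - 1) = T \<sigma>\<rbrakk>
     \<Longrightarrow> (St (IR r i (j - 1)), Some \<sigma>, All, IdI, St (IR r i j)) \<in> transM G"
| call_push: "\<lbrakk>r \<in> rules G; r = Rule A us As; 1 \<le> i; i \<le> length us; 1 \<le> j;
          j \<le> length (us ! (i - 1)); 1 \<le> \<kappa>; \<kappa> \<le> length As;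
          r' \<in> rules G; r' = Rule (As ! (\<kappa> - 1)) vs Bs; 1 \<le> m; m \<le> length vs;
          us ! (i - 1) ! (j - 1) = V \<kappa> m\<rbrakk>
     \<Longrightarrow> (St (IR r i (j - 1)), None, All, Push \<kappa> (GI (IR r i j)), St (IR r' m 0)) \<in> transM G"
| call_up: "\<lbrakk>r \<in> rules G; r = Rule A us As; 1 \<le> i; i \<le> length us; 1 \<le> j;
          j \<le> length (us ! (i - 1)); 1 \<le> \<kappa>; \<kappa> \<le> length As;
          r' \<in> rules G; r' = Rule (As ! (\<kappa> - 1)) vs Bs; 1 \<le> m; m \<le> length vs;
          us ! (i - 1) ! (j - 1) = V \<kappa> m\<rbrakk>
     \<Longrightarrow> (St (IR r i (j - 1)), None, All, Up \<kappa>, StP (IR r i j)) \<in> transM G"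
| call_set: "\<lbrakk>r \<in> rules G; r = Rule A us As; 1 \<le> i; i \<le> length us; 1 \<le> j;
          j \<le> length (us ! (i - 1)); 1 \<le> \<kappa>; \<kappa> \<le> length As;
          r' \<in> rules G; r' = Rule (As ! (\<kappa> - 1)) vs Bs; 1 \<le> m; m \<le> length vs;
          us ! (i - 1) ! (j - 1) = V \<kappa> m\<rbrakk>
     \<Longrightarrow> (StP (IR r i j), None, Equals (GR r'), SetI (GI (IR r i j)), St (IR r' m 0)) \<in> transM G"
| ret_set: "\<lbrakk>r \<in> rules G; r = Rule A us As; 1 \<le> i; i \<le> length us; 1 \<le> j;
          j \<le> length (us ! (i - 1)); 1 \<le> \<kappa>; \<kappa> \<le> length As;
          r' \<in> rules G; r' = Rule (As ! (\<kappa> - 1)) vs Bs; 1 \<le> m; m \<le> length vs;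
          us ! (i - 1) ! (j - 1) = V \<kappa> m\<rbrakk>
     \<Longrightarrow> (St (IR r' m (length (vs ! (m - 1)))), None, Equals (GI (IR r i j)), SetI (GR r'),
          StM (IR r i j)) \<in> transM G"
| ret_down: "\<lbrakk>r \<in> rules G; r = Rule A us As; 1 \<le> i; i \<le> length us; 1 \<le> j;
          j \<le> length (us ! (i - 1)); 1 \<le> \<kappa>; \<kappa> \<le> length As;
          r' \<in> rules G; r' = Rule (As ! (\<kappa> - 1)) vs Bs; 1 \<le> m; m \<le> length vs;
          us ! (i - 1) ! (j - 1) = V \<kappa> m\<rbrakk>
     \<Longrightarrow> (StM (IR r i j), None, All, Down, St (IR r i j)) \<in> transM G"

definition MG :: "('n, 't) pmcfg \<Rightarrow> (('n, 't) st, 't, ('n, 't) gam) tsa" where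
  "MG G = \<lparr> states = (\<Union>q \<in> insert IBox (Rbar G). {St q, StP q, StM q}),
            inp = terms G,
            stk = {GI IBox} \<union> GR ` rules G \<union> GI ` Rbar G,
            initial = St IBox,
            finals = {St IBox},
            trans = transM G \<rparr>"

end

theory Submission
  imports Defs "HOL-Library.Sublist"
begin


lemma distinct_filter_nth:
  "distinct (filter P xs) \<Longrightarrow> a < length xs \<Longrightarrow> b < length xs \<Longrightarrow> xs ! a = xs ! b \<Longrightarrow> P (xs ! a) \<Longrightarrow> a = b"
proof (induction xs arbitrary: a b)
  case Nil then show ?case by simp
next
  case (Cons x xs)
  show ?case
  proof (cases a)
    case 0
    then show ?thesis using Cons by (cases b) (auto simp: filter_empty_conv)
  next
    case (Suc a')
    then show ?thesis using Cons by (cases b) (auto split: if_splits)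
  qed
qed

lemma lin_unique:
  "distinct (filter P (concat xss)) \<Longrightarrow> i < length xss \<Longrightarrow> j < length (xss!i) \<Longrightarrow>
   i' < length xss \<Longrightarrow> j' < length (xss!i') \<Longrightarrow> xss!i!j = xss!i'!j' \<Longrightarrow> P (xss!i!j) \<Longrightarrow> i = i' \<and> j = j'"
proof (induction xss arbitrary: i i')
  case Nil then show ?case by simp
next
  case (Cons x xss)
  have d1: "distinct (filter P x)" and d2: "distinct (filter P (concat xss))"
   and dj: "set (filter P x) \<inter> set (filter P (concat xss)) = {}"
    using Cons.prems(1) by auto
  show ?case
  proof (cases i)
    case 0
    show ?thesis
    proof (cases i')
      case 0 then show ?thesis using `i = 0` Cons.prems d1 distinct_filter_nth[OF d1, of j j'] by auto
    next
      case (Suc i2)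
      have jj: "j < length x" using Cons.prems(3) `i=0` by simp
      have Pj: "P (x ! j)" using Cons.prems(7) `i=0` by simp
      have "x ! j \<in> set (filter P x)" using jj Pj by simp
      moreover have "i2 < length xss" "j' < length (xss ! i2)" using Cons.prems(4,5) Suc by auto
      then have "xss ! i2 ! j' \<in> set (concat xss)" using nth_mem by fastforce
      then have "xss ! i2 ! j' \<in> set (filter P (concat xss))" using Cons.prems Suc `i=0` by auto
      moreover have "x ! j = xss ! i2 ! j'" using Cons.prems Suc `i=0` by simp
      ultimately show ?thesis using dj by auto
    qed
  next
    case (Suc i1)
    show ?thesis
    proof (cases i')
      case 0
      have jj: "j' < length x" using Cons.prems(5) 0 by simp
      have Pj: "P (x ! j')" using Cons.prems(6,7) 0 by simp
      have "x ! j' \<in> set (filter P x)" using jj Pj by simp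
      moreover have "i1 < length xss" "j < length (xss ! i1)" using Cons.prems(2,3) Suc by auto
      then have "xss ! i1 ! j \<in> set (concat xss)" using nth_mem by fastforce
      then have "xss ! i1 ! j \<in> set (filter P (concat xss))" using Cons.prems Suc by auto
      moreover have "x ! j' = xss ! i1 ! j" using Cons.prems Suc 0 by simp
      ultimately show ?thesis using dj by auto
    next
      case (Suc i2)
      then show ?thesis using Cons.IH[OF d2, of i1 i2] Cons.prems `i = Suc i1` by auto
    qed
  qed
qed



record ('n, 't) gh =
  gA :: "nat list \<Rightarrow> (nat \<times> nat) option"
  gG :: "nat list \<Rightarrow> nat set"
  gP :: "nat list \<Rightarrow> (nat \<times> nat) set"
  gR :: "nat list \<Rightarrow> ('n, 't) rule"

definition retok :: "('n,'t) gh \<Rightarrow> nat list \<Rightarrow> ('n,'t) item \<Rightarrow> bool" where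
  "retok g p q \<longleftrightarrow> (q = IBox \<and> p = [1]) \<or>
     (\<exists>pp \<kappa> r i j. p = pp @ [\<kappa>] \<and> pp \<noteq> [] \<and> q = IR r i j \<and> r = gR g pp \<and> gA g pp = Some (i, j))"

definition valid_pos :: "('n,'t) rule \<Rightarrow> nat \<Rightarrow> nat \<Rightarrow> bool" where
  "valid_pos r i j \<longleftrightarrow> 1 \<le> i \<and> i \<le> length (comp r) \<and> 1 \<le> j \<and> j \<le> length (comp r ! (i - 1))"

definition stok :: "('n,'t) gh \<Rightarrow> (nat list \<Rightarrow> ('n,'t) gam lab option) \<Rightarrow> nat list \<Rightarrow> ('n,'t) st \<Rightarrow> bool" where
  "stok g \<xi> \<rho> s = (case s of
     St IBox \<Rightarrow> \<rho> = []
   | St (IR r i j) \<Rightarrow> \<rho> \<noteq> [] \<and> r = gR g \<rho> \<and> gA g \<rho> = Some (i, j)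
   | StP q \<Rightarrow> (\<exists>pp \<kappa> r i j m. \<rho> = pp @ [\<kappa>] \<and> pp \<noteq> [] \<and> q = IR r i j \<and> r = gR g pp \<and>
                 gA g pp = Some (i, j) \<and> comp r ! (i - 1) ! (j - 1) = V \<kappa> m \<and> gA g \<rho> = Some (m, 0))
   | StM q \<Rightarrow> \<rho> \<noteq> [] \<and> \<xi> \<rho> = Some (Lab (GR (gR g \<rho>))) \<and> gA g \<rho> = None \<and> retok g \<rho> q)"

definition Inv :: "('n,'t) pmcfg \<Rightarrow> nat \<Rightarrow> ('n,'t) st \<Rightarrow> (nat list \<Rightarrow> ('n,'t) gam lab option) \<Rightarrow> nat list \<Rightarrow> ('n,'t) gh \<Rightarrow> bool" where
  "Inv G k s \<xi> \<rho> g \<longleftrightarrow>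
    \<rho> \<in> dom \<xi> \<and>
    (\<forall>p \<in> dom \<xi>. p \<noteq> [] \<longrightarrow> butlast p \<in> dom \<xi>) \<and>
    (\<forall>p. p \<notin> dom \<xi> \<longrightarrow> gG g p = {} \<and> gP g p = {}) \<and>
    (\<forall>p r. p \<noteq> [] \<longrightarrow> \<xi> p = Some (Lab (GR r)) \<longrightarrow> r = gR g p) \<and>
    (\<forall>p q. \<xi> p = Some (Lab (GI q)) \<longrightarrow> p \<noteq> [] \<and> prefix p \<rho> \<and> retok g p q) \<and>
    (\<forall>p. gG g p \<subseteq> {1..k}) \<and>
    (\<forall>p \<kappa>. p \<noteq> [] \<longrightarrow> gG g (p @ [\<kappa>]) =
        {m. \<exists>i j. (i, j) \<in> gP g p \<and> comp (gR g p) ! (i - 1) ! (j - 1) = V \<kappa> m}) \<and>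
    (\<forall>p i j. (i, j) \<in> gP g p \<longrightarrow> valid_pos (gR g p) i j) \<and>
    (\<forall>p i0 j0. gA g p = Some (i0, j0) \<longrightarrow> i0 \<in> gG g p \<and> (\<forall>j. (i0, j) \<in> gP g p \<longrightarrow> j \<le> j0)) \<and>
    (\<forall>p i j. i \<notin> gG g p \<longrightarrow> (i, j) \<notin> gP g p) \<and>
    (\<forall>p. gA g p \<noteq> None \<longrightarrow> p \<noteq> [] \<and> prefix p \<rho>) \<and>
    stok g \<xi> \<rho> s"

definition srcm :: "(('n,'t) st, 't, ('n,'t) gam) transition \<Rightarrow> nat" where
  "srcm \<tau> = (case fst \<tau> of St (IR r i j0) \<Rightarrow> (case comp r ! (i - 1) ! j0 of V a b \<Rightarrow> b | T _ \<Rightarrow> 0) | _ \<Rightarrow> 1)"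

definition adv :: "('n,'t) gh \<Rightarrow> (('n,'t) st, 't, ('n,'t) gam) transition \<Rightarrow> nat list \<Rightarrow> ('n,'t) gh" where
  "adv g \<tau> \<rho> = (case fst \<tau> of St (IR r i j0) \<Rightarrow>
      g\<lparr>gA := (gA g)(\<rho> := Some (i, Suc j0)), gP := (gP g)(\<rho> := insert (i, Suc j0) (gP g \<rho>))\<rparr> | _ \<Rightarrow> g)"

definition tgt_rule :: "(('n,'t) st, 't, ('n,'t) gam) transition \<Rightarrow> ('n,'t) rule" where
  "tgt_rule \<tau> = (case snd (snd (snd (snd \<tau>))) of St (IR r i j) \<Rightarrow> r | _ \<Rightarrow> undefined)"

definition gupd :: "('n,'t) gh \<Rightarrow> (('n,'t) st, 't, ('n,'t) gam) transition \<Rightarrow> nat list \<Rightarrow> ('n,'t) gh" where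
  "gupd g \<tau> \<rho> = (case instr_of \<tau> of
     Push \<kappa> \<gamma> \<Rightarrow> (let g1 = adv g \<tau> \<rho>; c = \<rho> @ [\<kappa>] in
        g1\<lparr>gA := (gA g1)(c := Some (srcm \<tau>, 0)), gG := (gG g1)(c := insert (srcm \<tau>) (gG g1 c)),
           gR := (gR g1)(c := tgt_rule \<tau>)\<rparr>)
   | Up \<kappa> \<Rightarrow> (let g1 = adv g \<tau> \<rho>; c = \<rho> @ [\<kappa>] in
        g1\<lparr>gA := (gA g1)(c := Some (srcm \<tau>, 0)), gG := (gG g1)(c := insert (srcm \<tau>) (gG g1 c))\<rparr>)
   | IdI \<Rightarrow> adv g \<tau> \<rho>
   | SetI \<gamma> \<Rightarrow> (case snd (snd (snd (snd \<tau>))) of StM q \<Rightarrow> g\<lparr>gA := (gA g)(\<rho> := None)\<rparr> | _ \<Rightarrow> g)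
   | Down \<Rightarrow> g)"

definition g0 :: "('n,'t) gh" where
  "g0 = \<lparr>gA = (\<lambda>_. None), gG = (\<lambda>_. {}), gP = (\<lambda>_. {}), gR = (\<lambda>_. undefined)\<rparr>"

lemma inv_init: "Inv G k (St IBox) (Map.empty([] \<mapsto> At)) [] g0"
  unfolding Inv_def g0_def stok_def by auto



lemma prefix_snoc_not: "\<not> prefix (\<rho> @ [\<kappa>]) \<rho>"
  using prefix_length_le by fastforce

lemma prefix_snoc_neq: "prefix (pp @ [\<kappa>]) \<rho> \<Longrightarrow> pp \<noteq> \<rho>"
  by (metis prefix_snoc_not)

lemma InvD0_0: assumes "Inv G k s \<xi> \<rho> g" shows "\<rho> \<in> dom \<xi>"
  using assms unfolding Inv_def by (elim conjE) assumption

lemma InvD0_1: assumes "Inv G k s \<xi> \<rho> g" shows "\<forall>p \<in> dom \<xi>. p \<noteq> [] \<longrightarrow> butlast p \<in> dom \<xi>"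
  using assms unfolding Inv_def by (elim conjE) assumption

lemma InvD0_2: assumes "Inv G k s \<xi> \<rho> g" shows "\<forall>p. p \<notin> dom \<xi> \<longrightarrow> gG g p = {} \<and> gP g p = {}"
  using assms unfolding Inv_def by (elim conjE) assumption

lemma InvD0_3: assumes "Inv G k s \<xi> \<rho> g" shows "\<forall>p r. p \<noteq> [] \<longrightarrow> \<xi> p = Some (Lab (GR r)) \<longrightarrow> r = gR g p"
  using assms unfolding Inv_def by (elim conjE) assumption

lemma InvD0_4: assumes "Inv G k s \<xi> \<rho> g" shows "\<forall>p q. \<xi> p = Some (Lab (GI q)) \<longrightarrow> p \<noteq> [] \<and> prefix p \<rho> \<and> retok g p q"
  using assms unfolding Inv_def by (elim conjE) assumption

lemma InvD0_5: assumes "Inv G k s \<xi> \<rho> g" shows "\<forall>p. gG g p \<subseteq> {1..k}"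
  using assms unfolding Inv_def by (elim conjE) assumption

lemma InvD0_6: assumes "Inv G k s \<xi> \<rho> g" shows "\<forall>p \<kappa>. p \<noteq> [] \<longrightarrow> gG g (p @ [\<kappa>]) =
        {m. \<exists>i j. (i, j) \<in> gP g p \<and> comp (gR g p) ! (i - 1) ! (j - 1) = V \<kappa> m}"
  using assms unfolding Inv_def by (elim conjE) assumption

lemma InvD0_7: assumes "Inv G k s \<xi> \<rho> g" shows "\<forall>p i j. (i, j) \<in> gP g p \<longrightarrow> valid_pos (gR g p) i j"
  using assms unfolding Inv_def by (elim conjE) assumption

lemma InvD0_8: assumes "Inv G k s \<xi> \<rho> g" shows "\<forall>p i0 j0. gA g p = Some (i0, j0) \<longrightarrow> i0 \<in> gG g p \<and> (\<forall>j. (i0, j) \<in> gP g p \<longrightarrow> j \<le> j0)"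
  using assms unfolding Inv_def by (elim conjE) assumption

lemma InvD0_9: assumes "Inv G k s \<xi> \<rho> g" shows "\<forall>p i j. i \<notin> gG g p \<longrightarrow> (i, j) \<notin> gP g p"
  using assms unfolding Inv_def by (elim conjE) assumption

lemma InvD0_10: assumes "Inv G k s \<xi> \<rho> g" shows "\<forall>p. gA g p \<noteq> None \<longrightarrow> p \<noteq> [] \<and> prefix p \<rho>"
  using assms unfolding Inv_def by (elim conjE) assumption

lemma InvD0_11: assumes "Inv G k s \<xi> \<rho> g" shows "stok g \<xi> \<rho> s"
  using assms unfolding Inv_def by (elim conjE) assumption

lemmas InvD0 = InvD0_0 InvD0_1 InvD0_2 InvD0_3 InvD0_4 InvD0_5 InvD0_6 InvD0_7 InvD0_8 InvD0_9 InvD0_10 InvD0_11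

lemmas InvD = InvD0[rule_format]

lemma InvI:
  assumes "\<rho> \<in> dom \<xi>"
    "\<forall>p \<in> dom \<xi>. p \<noteq> [] \<longrightarrow> butlast p \<in> dom \<xi>"
    "\<forall>p. p \<notin> dom \<xi> \<longrightarrow> gG g p = {} \<and> gP g p = {}"
    "\<forall>p r. p \<noteq> [] \<longrightarrow> \<xi> p = Some (Lab (GR r)) \<longrightarrow> r = gR g p"
    "\<forall>p q. \<xi> p = Some (Lab (GI q)) \<longrightarrow> p \<noteq> [] \<and> prefix p \<rho> \<and> retok g p q"
    "\<forall>p. gG g p \<subseteq> {1..k}"
    "\<forall>p \<kappa>. p \<noteq> [] \<longrightarrow> gG g (p @ [\<kappa>]) =
        {m. \<exists>i j. (i, j) \<in> gP g p \<and> comp (gR g p) ! (i - 1) ! (j - 1) = V \<kappa> m}"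
    "\<forall>p i j. (i, j) \<in> gP g p \<longrightarrow> valid_pos (gR g p) i j"
    "\<forall>p i0 j0. gA g p = Some (i0, j0) \<longrightarrow> i0 \<in> gG g p \<and> (\<forall>j. (i0, j) \<in> gP g p \<longrightarrow> j \<le> j0)"
    "\<forall>p i j. i \<notin> gG g p \<longrightarrow> (i, j) \<notin> gP g p"
    "\<forall>p. gA g p \<noteq> None \<longrightarrow> p \<noteq> [] \<and> prefix p \<rho>"
    "stok g \<xi> \<rho> s"
  shows "Inv G k s \<xi> \<rho> g"
  unfolding Inv_def using assms by - ((rule conjI, assumption)+, assumption)

lemma retok_mono:
  assumes "retok g p q" "prefix p \<rho>"
    "\<And>pp. prefix pp \<rho> \<Longrightarrow> pp \<noteq> \<rho> \<Longrightarrow> gA g' pp = gA g pp \<and> gR g' pp = gR g pp"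
  shows "retok g' p q"
proof (cases "q = IBox \<and> p = [1]")
  case True then show ?thesis unfolding retok_def by simp
next
  case False
  have "\<exists>pp \<kappa> r i j. p = pp @ [\<kappa>] \<and> pp \<noteq> [] \<and> q = IR r i j \<and> r = gR g pp \<and> gA g pp = Some (i, j)"
    using assms(1) False unfolding retok_def by (simp only: simp_thms)
  then obtain pp \<kappa> r i j where h: "p = pp @ [\<kappa>]" "pp \<noteq> []" "q = IR r i j" "r = gR g pp" "gA g pp = Some (i, j)"
    by (elim exE conjE)
  have p1: "prefix pp \<rho>" using assms(2) h(1) prefix_order.trans[of pp "pp @ [\<kappa>]" \<rho>] by simp
  have p0: "prefix (pp @ [\<kappa>]) \<rho>" using assms(2) h(1) by simp
  have p2: "pp \<noteq> \<rho>" using p0 by (rule prefix_snoc_neq)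
  have "gA g' pp = gA g pp \<and> gR g' pp = gR g pp" using assms(3)[OF p1 p2] .
  then have "p = pp @ [\<kappa>] \<and> pp \<noteq> [] \<and> q = IR (gR g' pp) i j \<and> gA g' pp = Some (i, j)" using h by simp
  then show ?thesis unfolding retok_def by blast
qed

lemma inv_read:
  assumes inv: "Inv G k (St (IR r i j0)) \<xi> \<rho> g" and vp: "valid_pos r i (Suc j0)"
    and isT: "comp r ! (i-1) ! j0 = T \<sigma>"
  shows "Inv G k (St (IR r i (Suc j0))) \<xi> \<rho> (g\<lparr>gA := (gA g)(\<rho> := Some (i, Suc j0)), gP := (gP g)(\<rho> := insert (i, Suc j0) (gP g \<rho>))\<rparr>)"
proof -
  note D = InvD[OF inv]
  have st: "\<rho> \<noteq> []" "r = gR g \<rho>" "gA g \<rho> = Some (i, j0)" using D(12) unfolding stok_def by auto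
  have iG: "i \<in> gG g \<rho>" and le: "\<And>j. (i, j) \<in> gP g \<rho> \<Longrightarrow> j \<le> j0" using D(9)[OF st(3)] by auto
  show ?thesis
    apply (rule InvI)
    subgoal using D(1) .
    subgoal using D(2) by blast
    subgoal using D(1,3) by auto
    subgoal using D(4) by simp
    subgoal using D(5) retok_mono[where g=g and g'="g\<lparr>gA := (gA g)(\<rho> := Some (i, Suc j0)), gP := (gP g)(\<rho> := insert (i, Suc j0) (gP g \<rho>))\<rparr>" and \<rho>=\<rho>] by auto
    subgoal using D(6) by simp
    subgoal using D(7) isT st by auto
    subgoal using D(8) vp st by auto
    subgoal using D(9) iG le[THEN le_SucI] by auto
    subgoal using D(10) iG by auto
    subgoal using D(11) st by auto
    subgoal using st unfolding stok_def by simp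
    done
qed


lemma pre_snoc_mono: "prefix p \<rho> \<Longrightarrow> prefix p (\<rho> @ [\<kappa>])"
  by (simp add: prefix_snoc)

lemma pre_butlast: "prefix p \<rho> \<Longrightarrow> p \<noteq> \<rho> \<Longrightarrow> prefix p (butlast \<rho>)"
proof -
  assume a: "prefix p \<rho>" "p \<noteq> \<rho>"
  then have "\<rho> \<noteq> []" by auto
  then obtain b l where bl: "\<rho> = b @ [l]" by (metis rev_exhaust)
  have "p = b @ [l] \<or> prefix p b" using a(1) unfolding bl by (simp only: prefix_snoc)
  then have "prefix p b" using a(2) bl by simp
  then show ?thesis using bl by simp
qed

lemma not_prefix_c: "prefix pp \<rho> \<Longrightarrow> pp \<noteq> \<rho> @ [\<kappa>]"
  using prefix_snoc_not by metis

lemma gf_push: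
  assumes D7: "\<And>p \<kappa>. p \<noteq> [] \<Longrightarrow> gG g (p @ [\<kappa>]) =
        {m. \<exists>i j. (i, j) \<in> gP g p \<and> comp (gR g p) ! (i - 1) ! (j - 1) = V \<kappa> m}"
    and Pc: "gP g (\<rho> @ [\<kappa>]) = {}" and rho: "\<rho> \<noteq> []"
    and isV: "comp (gR g \<rho>) ! (i-1) ! jz = V \<kappa> m"
    and g': "gP g' = (gP g)(\<rho> := insert (i, Suc jz) (gP g \<rho>))"
            "gG g' = (gG g)(\<rho> @ [\<kappa>] := insert m (gG g (\<rho> @ [\<kappa>])))"
            "\<And>p. p \<noteq> \<rho> @ [\<kappa>] \<Longrightarrow> gR g' p = gR g p"
    and p: "p \<noteq> []"
  shows "gG g' (p @ [\<kappa>']) = {m. \<exists>i j. (i, j) \<in> gP g' p \<and> comp (gR g' p) ! (i - 1) ! (j - 1) = V \<kappa>' m}"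
proof -
  have cr: "\<rho> @ [\<kappa>] \<noteq> \<rho>" by simp
  show ?thesis
  proof (cases "p = \<rho>")
    case True
    have R: "gR g' \<rho> = gR g \<rho>" using g'(3) cr by metis
    have P: "gP g' \<rho> = insert (i, Suc jz) (gP g \<rho>)" using g'(1) by simp
    show ?thesis
    proof (cases "\<kappa>' = \<kappa>")
      case True
      have "gG g' (\<rho> @ [\<kappa>]) = insert m (gG g (\<rho> @ [\<kappa>]))" using g'(2) by simp
      also have "\<dots> = insert m {m. \<exists>i j. (i, j) \<in> gP g \<rho> \<and> comp (gR g \<rho>) ! (i - 1) ! (j - 1) = V \<kappa> m}"
        using D7[OF rho] by simp
      also have "\<dots> = {m. \<exists>i' j. (i', j) \<in> insert (i, Suc jz) (gP g \<rho>) \<and> comp (gR g \<rho>) ! (i' - 1) ! (j - 1) = V \<kappa> m}"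
      proof -
        have "(i, Suc jz) \<in> insert (i, Suc jz) (gP g \<rho>) \<and> comp (gR g \<rho>) ! (i - 1) ! (Suc jz - 1) = V \<kappa> m"
          using isV by simp
        then have mIn: "m \<in> {m. \<exists>i' j. (i', j) \<in> insert (i, Suc jz) (gP g \<rho>) \<and> comp (gR g \<rho>) ! (i' - 1) ! (j - 1) = V \<kappa> m}"
          by blast
        show ?thesis using isV mIn by auto
      qed
      finally show ?thesis using `p = \<rho>` True R P by simp
    next
      case False
      have ne: "\<rho> @ [\<kappa>'] \<noteq> \<rho> @ [\<kappa>]" using False by simp
      have "gG g' (\<rho> @ [\<kappa>']) = gG g (\<rho> @ [\<kappa>'])" using g'(2) ne by simp
      also have "\<dots> = {m. \<exists>i j. (i, j) \<in> gP g \<rho> \<and> comp (gR g \<rho>) ! (i - 1) ! (j - 1) = V \<kappa>' m}"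
        using D7[OF rho] by simp
      also have "\<dots> = {m. \<exists>i' j. (i', j) \<in> insert (i, Suc jz) (gP g \<rho>) \<and> comp (gR g \<rho>) ! (i' - 1) ! (j - 1) = V \<kappa>' m}"
        using isV False by auto
      finally show ?thesis using `p = \<rho>` R P by simp
    qed
  next
    case False
    have P: "gP g' p = gP g p" using g'(1) False by simp
    have ne: "p @ [\<kappa>'] \<noteq> \<rho> @ [\<kappa>]" using False by simp
    have G: "gG g' (p @ [\<kappa>']) = gG g (p @ [\<kappa>'])" unfolding g'(2) by (simp only: fun_upd_apply ne if_False)
    show ?thesis
    proof (cases "p = \<rho> @ [\<kappa>]")
      case True
      have "gP g p = {}" using Pc True by simp
      moreover have "p @ [\<kappa>'] \<noteq> \<rho> @ [\<kappa>]" using True by simp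
      ultimately show ?thesis using G P D7[OF p, of \<kappa>'] by simp
    next
      case False
      have "gR g' p = gR g p" using g'(3) False by simp
      then show ?thesis using G P D7[OF p, of \<kappa>'] by simp
    qed
  qed
qed


lemma inv_push:
  assumes inv: "Inv G k (St (IR r i j0)) \<xi> \<rho> g" and vp: "valid_pos r i (Suc j0)"
    and isV: "comp r ! (i-1) ! j0 = V \<kappa> m"
    and nd: "\<rho> @ [\<kappa>] \<notin> dom \<xi>"
    and mk: "1 \<le> m" "m \<le> k"
    and gA': "gA g' = (gA g)(\<rho> := Some (i, Suc j0), \<rho> @ [\<kappa>] := Some (m, 0))"
    and gG': "gG g' = (gG g)(\<rho> @ [\<kappa>] := insert m (gG g (\<rho> @ [\<kappa>])))"
    and gP': "gP g' = (gP g)(\<rho> := insert (i, Suc j0) (gP g \<rho>))"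
    and gR': "gR g' = (gR g)(\<rho> @ [\<kappa>] := r')"
  shows "Inv G k (St (IR r' m 0)) (\<xi>(\<rho> @ [\<kappa>] \<mapsto> Lab (GI (IR r i (Suc j0))))) (\<rho> @ [\<kappa>]) g'"
    and "m \<notin> gG g (\<rho> @ [\<kappa>])"
proof -
  note D = InvD[OF inv]
  define c where "c = \<rho> @ [\<kappa>]"
  have st: "\<rho> \<noteq> []" "r = gR g \<rho>" "gA g \<rho> = Some (i, j0)" using D(12) unfolding stok_def by auto
  have iG: "i \<in> gG g \<rho>" and le: "\<And>j. (i, j) \<in> gP g \<rho> \<Longrightarrow> j \<le> j0" using D(9)[OF st(3)] by auto
  have gAc: "gA g' = (gA g)(\<rho> := Some (i, Suc j0), c := Some (m, 0))" using gA' c_def by simp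
  have gGc: "gG g' = (gG g)(c := insert m (gG g c))" using gG' c_def by simp
  have gRc: "gR g' = (gR g)(c := r')" using gR' c_def by simp
  have ndc: "c \<notin> dom \<xi>" using nd c_def by simp
  have cr: "c \<noteq> \<rho>" unfolding c_def by simp
  have Gc: "gG g c = {}" and Pc: "gP g c = {}" using D(3) nd unfolding c_def by auto
  have rd: "\<rho> \<in> dom \<xi>" by (rule D(1))
  have pc: "\<And>pp. prefix pp \<rho> \<Longrightarrow> pp \<noteq> c" unfolding c_def by (rule not_prefix_c)
  have rc: "prefix \<rho> c" unfolding c_def by simp
  have Rr: "gR g' \<rho> = r" using gR' cr st by simp
  show "m \<notin> gG g (\<rho> @ [\<kappa>])" using Gc unfolding c_def by simp
  have GF: "\<And>p \<kappa>'. p \<noteq> [] \<Longrightarrow> gG g' (p @ [\<kappa>']) = {m. \<exists>i j. (i, j) \<in> gP g' p \<and> comp (gR g' p) ! (i - 1) ! (j - 1) = V \<kappa>' m}"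
    apply (rule gf_push[where g=g and \<rho>=\<rho> and \<kappa>=\<kappa> and i=i and jz=j0 and m=m])
    using D(7) apply blast
    using Pc c_def apply simp
    using st apply simp
    using isV st apply simp
    using gP' apply simp
    using gG' apply simp
    using gR' apply simp
    by simp
  show "Inv G k (St (IR r' m 0)) (\<xi>(\<rho> @ [\<kappa>] \<mapsto> Lab (GI (IR r i (Suc j0))))) (\<rho> @ [\<kappa>]) g'"
    unfolding c_def[symmetric]
    apply (rule InvI)
    subgoal by simp
    subgoal using D(2) rd c_def by auto
    subgoal using D(3) rd gGc gP' cr c_def by auto
    subgoal using D(4) gRc by auto
    subgoal
    proof (intro allI impI)
      fix p q assume a: "(\<xi>(c \<mapsto> Lab (GI (IR r i (Suc j0))))) p = Some (Lab (GI q))"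
      show "p \<noteq> [] \<and> prefix p c \<and> retok g' p q"
      proof (cases "p = c")
        case True
        then have q: "q = IR r i (Suc j0)" using a by simp
        have "retok g' c q" unfolding retok_def q using st Rr gAc cr c_def by auto
        then show ?thesis using True c_def by simp
      next
        case False
        then have a': "\<xi> p = Some (Lab (GI q))" using a by simp
        have h: "p \<noteq> [] \<and> prefix p \<rho> \<and> retok g p q" using D(5)[OF a'] .
        have "retok g' p q"
        proof (rule retok_mono[where g=g and \<rho>=\<rho>])
          show "retok g p q" using h by simp
          show "prefix p \<rho>" using h by simp
          fix pp assume "prefix pp \<rho>" "pp \<noteq> \<rho>"
          then have "pp \<noteq> c" using pc by simp
          then show "gA g' pp = gA g pp \<and> gR g' pp = gR g pp" using gAc gRc `pp \<noteq> \<rho>` by simp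
        qed
        then show ?thesis using h rc prefix_order.trans by blast
      qed
    qed
    subgoal using D(6) gGc mk by auto
    subgoal using GF by simp
    subgoal using D(8) vp gP' gRc Rr Pc cr by (auto split: if_splits)
    subgoal
    proof (intro allI impI)
      fix p i0 j1 assume a: "gA g' p = Some (i0, j1)"
      show "i0 \<in> gG g' p \<and> (\<forall>j. (i0, j) \<in> gP g' p \<longrightarrow> j \<le> j1)"
      proof (cases "p = c")
        case True then show ?thesis using a gAc gGc gP' Pc cr by auto
      next
        case False
        show ?thesis
        proof (cases "p = \<rho>")
          case True then show ?thesis using a gAc gGc gP' cr False iG le[THEN le_SucI] by auto
        next
          case False
          then show ?thesis using a gAc gGc gP' `p \<noteq> c` D(9)[of p i0 j1] by auto
        qed
      qed
    qed
    subgoal using D(10) gGc gP' iG by auto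
    subgoal
    proof (intro allI impI)
      fix p assume a: "gA g' p \<noteq> None"
      show "p \<noteq> [] \<and> prefix p c"
      proof (cases "p = c \<or> p = \<rho>")
        case True then show ?thesis using rc st by auto
      next
        case False
        then have "gA g p \<noteq> None" using a gAc by simp
        then have "p \<noteq> [] \<and> prefix p \<rho>" using D(11) by blast
        then show ?thesis using rc prefix_order.trans by blast
      qed
    qed
    subgoal unfolding stok_def using gAc gRc c_def by simp
    done
qed


lemma gf_up:
  assumes D7: "\<And>p \<kappa>. p \<noteq> [] \<Longrightarrow> gG g (p @ [\<kappa>]) =
        {m. \<exists>i j. (i, j) \<in> gP g p \<and> comp (gR g p) ! (i - 1) ! (j - 1) = V \<kappa> m}"
    and rho: "\<rho> \<noteq> []"
    and isV: "comp (gR g \<rho>) ! (i-1) ! jz = V \<kappa> m"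
    and g': "gP g' = (gP g)(\<rho> := insert (i, Suc jz) (gP g \<rho>))"
            "gG g' = (gG g)(\<rho> @ [\<kappa>] := insert m (gG g (\<rho> @ [\<kappa>])))"
            "gR g' = gR g"
    and p: "p \<noteq> []"
  shows "gG g' (p @ [\<kappa>']) = {m. \<exists>i j. (i, j) \<in> gP g' p \<and> comp (gR g' p) ! (i - 1) ! (j - 1) = V \<kappa>' m}"
proof (cases "p = \<rho>")
  case True
  have P: "gP g' \<rho> = insert (i, Suc jz) (gP g \<rho>)" using g'(1) by simp
  show ?thesis
  proof (cases "\<kappa>' = \<kappa>")
    case True
    have "gG g' (\<rho> @ [\<kappa>]) = insert m (gG g (\<rho> @ [\<kappa>]))" using g'(2) by simp
    also have "\<dots> = insert m {m. \<exists>i j. (i, j) \<in> gP g \<rho> \<and> comp (gR g \<rho>) ! (i - 1) ! (j - 1) = V \<kappa> m}"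
      using D7[OF rho] by simp
    also have "\<dots> = {m. \<exists>i' j. (i', j) \<in> insert (i, Suc jz) (gP g \<rho>) \<and> comp (gR g \<rho>) ! (i' - 1) ! (j - 1) = V \<kappa> m}"
    proof -
      have "(i, Suc jz) \<in> insert (i, Suc jz) (gP g \<rho>) \<and> comp (gR g \<rho>) ! (i - 1) ! (Suc jz - 1) = V \<kappa> m"
        using isV by simp
      then have mIn: "m \<in> {m. \<exists>i' j. (i', j) \<in> insert (i, Suc jz) (gP g \<rho>) \<and> comp (gR g \<rho>) ! (i' - 1) ! (j - 1) = V \<kappa> m}"
        by blast
      show ?thesis using isV mIn by auto
    qed
    finally show ?thesis using `p = \<rho>` True g'(3) P by simp
  next
    case False
    have ne: "\<rho> @ [\<kappa>'] \<noteq> \<rho> @ [\<kappa>]" using False by simp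
    have "gG g' (\<rho> @ [\<kappa>']) = gG g (\<rho> @ [\<kappa>'])" unfolding g'(2) by (simp only: fun_upd_apply ne if_False)
    also have "\<dots> = {m. \<exists>i j. (i, j) \<in> gP g \<rho> \<and> comp (gR g \<rho>) ! (i - 1) ! (j - 1) = V \<kappa>' m}"
      using D7[OF rho] by simp
    also have "\<dots> = {m. \<exists>i' j. (i', j) \<in> insert (i, Suc jz) (gP g \<rho>) \<and> comp (gR g \<rho>) ! (i' - 1) ! (j - 1) = V \<kappa>' m}"
      using isV False by auto
    finally show ?thesis using `p = \<rho>` g'(3) P by simp
  qed
next
  case False
  have P: "gP g' p = gP g p" using g'(1) False by simp
  have ne: "p @ [\<kappa>'] \<noteq> \<rho> @ [\<kappa>]" using False by simp
  have G: "gG g' (p @ [\<kappa>']) = gG g (p @ [\<kappa>'])" unfolding g'(2) by (simp only: fun_upd_apply ne if_False)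
  show ?thesis using G P g'(3) D7[OF p, of \<kappa>'] by simp
qed

lemma inv_up:
  assumes inv: "Inv G k (St (IR r i j0)) \<xi> \<rho> g" and vp: "valid_pos r i (Suc j0)"
    and isV: "comp r ! (i-1) ! j0 = V \<kappa> m"
    and dm: "\<rho> @ [\<kappa>] \<in> dom \<xi>"
    and mk: "1 \<le> m" "m \<le> k"
    and lin: "distinct (filter is_var (concat (comp r)))"
    and gA': "gA g' = (gA g)(\<rho> := Some (i, Suc j0), \<rho> @ [\<kappa>] := Some (m, 0))"
    and gG': "gG g' = (gG g)(\<rho> @ [\<kappa>] := insert m (gG g (\<rho> @ [\<kappa>])))"
    and gP': "gP g' = (gP g)(\<rho> := insert (i, Suc j0) (gP g \<rho>))"
    and gR': "gR g' = gR g"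
  shows "Inv G k (StP (IR r i (Suc j0))) \<xi> (\<rho> @ [\<kappa>]) g'"
    and "m \<notin> gG g (\<rho> @ [\<kappa>])"
proof -
  note D = InvD[OF inv]
  define c where "c = \<rho> @ [\<kappa>]"
  have st: "\<rho> \<noteq> []" "r = gR g \<rho>" "gA g \<rho> = Some (i, j0)" using D(12) unfolding stok_def by auto
  have iG: "i \<in> gG g \<rho>" and le: "\<And>j. (i, j) \<in> gP g \<rho> \<Longrightarrow> j \<le> j0" using D(9)[OF st(3)] by auto
  have gAc: "gA g' = (gA g)(\<rho> := Some (i, Suc j0), c := Some (m, 0))" using gA' c_def by simp
  have gGc: "gG g' = (gG g)(c := insert m (gG g c))" using gG' c_def by simp
  have dmc: "c \<in> dom \<xi>" using dm c_def by simp
  have cr: "c \<noteq> \<rho>" unfolding c_def by simp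
  have rd: "\<rho> \<in> dom \<xi>" by (rule D(1))
  have pc: "\<And>pp. prefix pp \<rho> \<Longrightarrow> pp \<noteq> c" unfolding c_def by (rule not_prefix_c)
  have rc: "prefix \<rho> c" unfolding c_def by simp
  have fresh: "m \<notin> gG g c"
  proof
    assume "m \<in> gG g c"
    then obtain i' j' where ij: "(i', j') \<in> gP g \<rho>" "comp r ! (i' - 1) ! (j' - 1) = V \<kappa> m"
      using D(7)[OF st(1), of \<kappa>] st(2) unfolding c_def by auto
    have v': "valid_pos r i' j'" using D(8) ij(1) st(2) by simp
    have "i' - 1 = i - 1 \<and> j' - 1 = j0"
      apply (rule lin_unique[OF lin])
      using v' vp isV ij(2) unfolding valid_pos_def by (auto simp: is_var_def)
    then have "i' = i" "j' = Suc j0" using v' vp unfolding valid_pos_def by auto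
    then show False using le ij(1) by fastforce
  qed
  show "m \<notin> gG g (\<rho> @ [\<kappa>])" using fresh unfolding c_def by simp
  have GF: "\<And>p \<kappa>'. p \<noteq> [] \<Longrightarrow> gG g' (p @ [\<kappa>']) = {m. \<exists>i j. (i, j) \<in> gP g' p \<and> comp (gR g' p) ! (i - 1) ! (j - 1) = V \<kappa>' m}"
    apply (rule gf_up[where g=g and \<rho>=\<rho> and \<kappa>=\<kappa> and i=i and jz=j0 and m=m])
    using D(7) apply blast
    using st apply simp
    using isV st apply simp
    using gP' apply simp
    using gG' apply simp
    using gR' apply simp
    by simp
  show "Inv G k (StP (IR r i (Suc j0))) \<xi> (\<rho> @ [\<kappa>]) g'"
    unfolding c_def[symmetric]
    apply (rule InvI)
    subgoal by (rule dmc)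
    subgoal using D(2) by blast
    subgoal using D(3) rd dmc gGc gP' cr by auto
    subgoal using D(4) gR' by auto
    subgoal
    proof (intro allI impI)
      fix p q assume a': "\<xi> p = Some (Lab (GI q))"
      have h: "p \<noteq> [] \<and> prefix p \<rho> \<and> retok g p q" using D(5)[OF a'] .
      have "retok g' p q"
      proof (rule retok_mono[where g=g and \<rho>=\<rho>])
        show "retok g p q" using h by simp
        show "prefix p \<rho>" using h by simp
        fix pp assume "prefix pp \<rho>" "pp \<noteq> \<rho>"
        then have "pp \<noteq> c" using pc by simp
        then show "gA g' pp = gA g pp \<and> gR g' pp = gR g pp" using gAc gR' `pp \<noteq> \<rho>` by simp
      qed
      then show "p \<noteq> [] \<and> prefix p c \<and> retok g' p q" using h rc prefix_order.trans by blast
    qed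
    subgoal using D(6) gGc mk by auto
    subgoal using GF by simp
    subgoal using D(8) vp gP' gR' st by (auto split: if_splits)
    subgoal
    proof (intro allI impI)
      fix p i0 j1 assume a: "gA g' p = Some (i0, j1)"
      show "i0 \<in> gG g' p \<and> (\<forall>j. (i0, j) \<in> gP g' p \<longrightarrow> j \<le> j1)"
      proof (cases "p = c")
        case True
        have "\<And>j. (m, j) \<notin> gP g c" using D(10) fresh by blast
        then show ?thesis using True a gAc gGc gP' cr by auto
      next
        case False
        show ?thesis
        proof (cases "p = \<rho>")
          case True then show ?thesis using a gAc gGc gP' cr False iG le[THEN le_SucI] by auto
        next
          case False
          then show ?thesis using a gAc gGc gP' `p \<noteq> c` D(9)[of p i0 j1] by auto
        qed
      qed
    qed
    subgoal using D(10) gGc gP' iG by auto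
    subgoal
    proof (intro allI impI)
      fix p assume a: "gA g' p \<noteq> None"
      show "p \<noteq> [] \<and> prefix p c"
      proof (cases "p = c \<or> p = \<rho>")
        case True then show ?thesis using rc st c_def by auto
      next
        case False
        then have "gA g p \<noteq> None" using a gAc by simp
        then have "p \<noteq> [] \<and> prefix p \<rho>" using D(11) by blast
        then show ?thesis using rc prefix_order.trans by blast
      qed
    qed
    subgoal unfolding stok_def using gAc gR' st isV c_def by auto
    done
qed


lemma inv_init1:
  assumes inv: "Inv G k (St IBox) \<xi> \<rho> g"
    and nd: "\<rho> @ [1] \<notin> dom \<xi>" and k1: "1 \<le> k"
    and gA': "gA g' = (gA g)(\<rho> @ [1] := Some (1, 0))"
    and gG': "gG g' = (gG g)(\<rho> @ [1] := insert 1 (gG g (\<rho> @ [1])))"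
    and gP': "gP g' = gP g"
    and gR': "gR g' = (gR g)(\<rho> @ [1] := r)"
  shows "Inv G k (St (IR r 1 0)) (\<xi>(\<rho> @ [1] \<mapsto> Lab (GI IBox))) (\<rho> @ [1]) g'"
    and "1 \<notin> gG g (\<rho> @ [1])"
proof -
  note D = InvD[OF inv]
  have r0: "\<rho> = []" using D(12) unfolding stok_def by simp
  have nd1: "[1] \<notin> dom \<xi>" using nd r0 by simp
  have G1: "gG g [1] = {}" and P1: "gP g [1] = {}" using D(3)[OF nd1] by auto
  show "1 \<notin> gG g (\<rho> @ [1])" using G1 r0 by simp
  have gA1: "gA g' = (gA g)([1] := Some (1, 0))" using gA' r0 by simp
  have gG1: "gG g' = (gG g)([1] := {1})" using gG' r0 G1 by simp
  have gR1: "gR g' = (gR g)([1] := r)" using gR' r0 by simp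
  have rd: "[] \<in> dom \<xi>" using D(1) r0 by simp
  have noGI: "\<And>p q. \<xi> p = Some (Lab (GI q)) \<Longrightarrow> False"
  proof -
    fix p q assume "\<xi> p = Some (Lab (GI q))"
    then have "p \<noteq> [] \<and> prefix p \<rho>" using D(5) by blast
    then show False using r0 by simp
  qed
  have noA: "\<And>p. gA g p = None"
  proof -
    fix p show "gA g p = None"
    proof (rule ccontr)
      assume "gA g p \<noteq> None"
      then have "p \<noteq> [] \<and> prefix p \<rho>" using D(11) by blast
      then show False using r0 by simp
    qed
  qed
  show "Inv G k (St (IR r 1 0)) (\<xi>(\<rho> @ [1] \<mapsto> Lab (GI IBox))) (\<rho> @ [1]) g'"
    unfolding r0 append_Nil
    apply (rule InvI)
    subgoal by simp
    subgoal using D(2) rd by auto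
    subgoal using D(3) gG1 gP' by auto
    subgoal using D(4) gR1 by auto
    subgoal
    proof (intro allI impI)
      fix p q assume a: "(\<xi>([1] \<mapsto> Lab (GI IBox))) p = Some (Lab (GI q))"
      show "p \<noteq> [] \<and> prefix p [1] \<and> retok g' p q"
      proof (cases "p = [1]")
        case True then show ?thesis using a unfolding retok_def by simp
      next
        case False then have "\<xi> p = Some (Lab (GI q))" using a by simp
        then show ?thesis using noGI by blast
      qed
    qed
    subgoal using D(6) gG1 k1 by auto
    subgoal
    proof (intro allI impI)
      fix p :: "nat list" and \<kappa>' :: nat assume p: "p \<noteq> []"
      have ne: "p @ [\<kappa>'] \<noteq> [1]" using p by (cases p) auto
      have "gG g' (p @ [\<kappa>']) = gG g (p @ [\<kappa>'])" unfolding gG1 by (simp only: fun_upd_apply ne if_False)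
      also have "\<dots> = {m. \<exists>i j. (i, j) \<in> gP g p \<and> comp (gR g p) ! (i - 1) ! (j - 1) = V \<kappa>' m}"
        using D(7)[OF p] by simp
      also have "\<dots> = {m. \<exists>i j. (i, j) \<in> gP g' p \<and> comp (gR g' p) ! (i - 1) ! (j - 1) = V \<kappa>' m}"
        using gP' gR1 P1 by (cases "p = [1]") auto
      finally show "gG g' (p @ [\<kappa>']) = {m. \<exists>i j. (i, j) \<in> gP g' p \<and> comp (gR g' p) ! (i - 1) ! (j - 1) = V \<kappa>' m}" .
    qed
    subgoal using D(8) gP' gR1 P1 by auto
    subgoal using noA gA1 gG1 gP' P1 by auto
    subgoal using D(10) gG1 gP' P1 by auto
    subgoal using noA gA1 by auto
    subgoal unfolding stok_def using gA1 gR1 by simp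
    done
qed

lemma inv_callset:
  assumes inv: "Inv G k (StP (IR r i j)) \<xi> \<rho> g"
    and lab: "\<xi> \<rho> = Some (Lab (GR r'))"
    and isV: "comp r ! (i-1) ! (j-1) = V \<kappa>' m'"
  shows "Inv G k (St (IR r' m' 0)) (\<xi>(\<rho> \<mapsto> Lab (GI (IR r i j)))) \<rho> g"
proof -
  note D = InvD[OF inv]
  obtain pp \<kappa> m where h: "\<rho> = pp @ [\<kappa>]" "pp \<noteq> []" "r = gR g pp" "gA g pp = Some (i, j)"
     "comp r ! (i - 1) ! (j - 1) = V \<kappa> m" "gA g \<rho> = Some (m, 0)"
    using D(12) unfolding stok_def by auto
  have mm: "m' = m" using h(5) isV by simp
  have rn: "\<rho> \<noteq> []" using h(1) by simp
  have rr: "r' = gR g \<rho>" using D(4)[OF rn lab] .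
  have rt: "retok g \<rho> (IR r i j)" unfolding retok_def using h by auto
  show ?thesis
    apply (rule InvI)
    subgoal using D(1) by simp
    subgoal using D(2) D(1) by auto
    subgoal using D(3) D(1) by auto
    subgoal using D(4) by auto
    subgoal using D(5) rt rn by auto
    subgoal using D(6) by auto
    subgoal using D(7) by auto
    subgoal using D(8) by auto
    subgoal using D(9) by auto
    subgoal using D(10) by auto
    subgoal using D(11) by auto
    subgoal unfolding stok_def using rn rr h(6) mm by simp
    done
qed

lemma inv_ret:
  assumes inv: "Inv G k (St (IR r' m j0)) \<xi> \<rho> g"
    and lab: "\<xi> \<rho> = Some (Lab (GI q))"
  shows "Inv G k (StM q) (\<xi>(\<rho> \<mapsto> Lab (GR r'))) \<rho> (g\<lparr>gA := (gA g)(\<rho> := None)\<rparr>)"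
proof -
  note D = InvD[OF inv]
  have st: "\<rho> \<noteq> []" "r' = gR g \<rho>" "gA g \<rho> = Some (m, j0)" using D(12) unfolding stok_def by auto
  have rt: "retok g \<rho> q" using D(5)[OF lab] by simp
  have mono: "\<And>p q. prefix p \<rho> \<Longrightarrow> retok g p q \<Longrightarrow> retok (g\<lparr>gA := (gA g)(\<rho> := None)\<rparr>) p q"
  proof -
    fix p q assume a: "prefix p \<rho>" "retok g p q"
    show "retok (g\<lparr>gA := (gA g)(\<rho> := None)\<rparr>) p q"
      by (rule retok_mono[where g=g and \<rho>=\<rho>]) (use a in auto)
  qed
  show ?thesis
    apply (rule InvI)
    subgoal using D(1) by simp
    subgoal using D(2) D(1) by auto
    subgoal using D(3) D(1) by auto
    subgoal using D(4) st by auto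
    subgoal
    proof (intro allI impI)
      fix p q' assume a: "(\<xi>(\<rho> \<mapsto> Lab (GR r'))) p = Some (Lab (GI q'))"
      then have pr: "p \<noteq> \<rho>" by auto
      then have a': "\<xi> p = Some (Lab (GI q'))" using a by simp
      have h: "p \<noteq> [] \<and> prefix p \<rho> \<and> retok g p q'" using D(5)[OF a'] .
      then show "p \<noteq> [] \<and> prefix p \<rho> \<and> retok (g\<lparr>gA := (gA g)(\<rho> := None)\<rparr>) p q'" using mono by blast
    qed
    subgoal using D(6) by auto
    subgoal using D(7) by auto
    subgoal using D(8) by auto
    subgoal using D(9) by auto
    subgoal using D(10) by auto
    subgoal using D(11) by auto
    subgoal unfolding stok_def using st mono[OF _ rt] by simp
    done
qed

lemma inv_down:
  assumes inv: "Inv G k (StM q) \<xi> \<rho> g"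
  shows "Inv G k (St q) \<xi> (butlast \<rho>) g"
proof -
  note D = InvD[OF inv]
  have st: "\<rho> \<noteq> []" "\<xi> \<rho> = Some (Lab (GR (gR g \<rho>)))" "gA g \<rho> = None" "retok g \<rho> q"
    using D(12) unfolding stok_def by auto
  show ?thesis
    apply (rule InvI)
    subgoal using D(2) D(1) st(1) by blast
    subgoal using D(2) by auto
    subgoal using D(3) by auto
    subgoal using D(4) by auto
    subgoal
    proof (intro allI impI)
      fix p q' assume a: "\<xi> p = Some (Lab (GI q'))"
      have h: "p \<noteq> [] \<and> prefix p \<rho> \<and> retok g p q'" using D(5)[OF a] .
      have "p \<noteq> \<rho>" using a st(2) by auto
      then have "prefix p (butlast \<rho>)" using h pre_butlast by blast
      then show "p \<noteq> [] \<and> prefix p (butlast \<rho>) \<and> retok g p q'" using h by simp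
    qed
    subgoal using D(6) by auto
    subgoal using D(7) by auto
    subgoal using D(8) by auto
    subgoal using D(9) by auto
    subgoal using D(10) by auto
    subgoal
    proof (intro allI impI)
      fix p assume a: "gA g p \<noteq> None"
      have h: "p \<noteq> [] \<and> prefix p \<rho>" using D(11) a by blast
      have "p \<noteq> \<rho>" using a st(3) by auto
      then have "prefix p (butlast \<rho>)" using h pre_butlast by blast
      then show "p \<noteq> [] \<and> prefix p (butlast \<rho>)" using h by simp
    qed
    subgoal
    proof -
      show "stok g \<xi> (butlast \<rho>) (St q)"
      proof (cases "q = IBox \<and> \<rho> = [1]")
        case True then show ?thesis unfolding stok_def by simp
      next
        case False
        then obtain pp \<kappa> r i j where h: "\<rho> = pp @ [\<kappa>]" "pp \<noteq> []" "q = IR r i j" "r = gR g pp" "gA g pp = Some (i, j)"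
          using st(4) unfolding retok_def by blast
        then show ?thesis unfolding stok_def by simp
      qed
    qed
    done
qed


lemma kM_len: "is_kMCFG k G \<Longrightarrow> r \<in> rules G \<Longrightarrow> length (comp r) \<le> k"
  unfolding is_kMCFG_def by blast

lemma kM_lin: "is_kMCFG k G \<Longrightarrow> r \<in> rules G \<Longrightarrow> distinct (filter is_var (concat (comp r)))"
  unfolding is_kMCFG_def linear_rule_def by blast

definition SP :: "('n,'t) pmcfg \<Rightarrow> nat \<Rightarrow> ('n,'t) gh \<Rightarrow> (('n,'t) st, 't, ('n,'t) gam) transition \<Rightarrow> nat list \<Rightarrow> ('n,'t) st \<Rightarrow> (nat list \<Rightarrow> ('n,'t) gam lab option) \<Rightarrow> nat list \<Rightarrow> bool" where
  "SP G k g \<tau> \<rho> s' \<xi>' \<rho>' \<longleftrightarrow> Inv G k s' \<xi>' \<rho>' (gupd g \<tau> \<rho>) \<and>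
     (is_push_or_up (instr_of \<tau>) \<longrightarrow> srcm \<tau> \<notin> gG g \<rho>') \<and>
     gG (gupd g \<tau> \<rho>) = (if is_push_or_up (instr_of \<tau>) then (gG g)(\<rho>' := insert (srcm \<tau>) (gG g \<rho>')) else gG g)"

lemma inv_step:
  assumes kM: "is_kMCFG k G"
    and inv: "Inv G k s \<xi> \<rho> g"
    and tr: "\<tau> \<in> transM G"
    and stp: "step \<tau> (s, (\<xi>, \<rho>), w) (s', (\<xi>', \<rho>'), w')"
  shows "SP G k g \<tau> \<rho> s' \<xi>' \<rho>'"
proof -
  obtain q1 om pr f q2 where tau: "\<tau> = (q1, om, pr, f, q2)" by (cases \<tau>) auto
  from tr[unfolded tau] show ?thesis
  proof (cases rule: transM.cases)
  case (init1 r S u As)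
  have T: "\<tau> = (St IBox, None, All, Push 1 (GI IBox), St (IR r 1 0))" using tau init1 by simp
  have h: "s = St IBox" "s' = St (IR r 1 0)" "\<rho> @ [1] \<notin> dom \<xi>" "\<xi>' = \<xi>(\<rho> @ [1] \<mapsto> Lab (GI IBox))" "\<rho>' = \<rho> @ [1]"
    using stp unfolding T step_def holds_def by (auto split: if_splits)
  have k1: "1 \<le> k" using kM_len[OF kM, of r] init1 by simp
  have gu: "gA (gupd g \<tau> \<rho>) = (gA g)(\<rho> @ [1] := Some (1, 0))"
     "gG (gupd g \<tau> \<rho>) = (gG g)(\<rho> @ [1] := insert 1 (gG g (\<rho> @ [1])))"
     "gP (gupd g \<tau> \<rho>) = gP g" "gR (gupd g \<tau> \<rho>) = (gR g)(\<rho> @ [1] := r)"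
    unfolding T by (simp_all add: gupd_def adv_def srcm_def tgt_rule_def instr_of_def Let_def)
  have sm: "srcm \<tau> = 1" "is_push_or_up (instr_of \<tau>)" unfolding T
    by (simp_all add: srcm_def instr_of_def is_push_or_up_def)
  note R = inv_init1[OF inv[unfolded h(1)] h(3) k1 gu]
  show ?thesis unfolding SP_def using R h sm gu(2) by simp
next
  case (init2 r S u As)
  have T: "\<tau> = (St (IR r 1 (length u)), None, Equals (GI IBox), SetI (GR r), StM IBox)" using tau init2 by simp
  have h: "s = St (IR r 1 (length u))" "s' = StM IBox" "\<xi> \<rho> = Some (Lab (GI IBox))" "\<xi>' = \<xi>(\<rho> \<mapsto> Lab (GR r))" "\<rho>' = \<rho>"
    using stp unfolding T step_def holds_def by (auto split: if_splits)
  have gu: "gupd g \<tau> \<rho> = g\<lparr>gA := (gA g)(\<rho> := None)\<rparr>" "\<not> is_push_or_up (instr_of \<tau>)"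
    unfolding T by (simp_all add: gupd_def instr_of_def is_push_or_up_def)
  note R = inv_ret[OF inv[unfolded h(1)] h(3)]
  show ?thesis unfolding SP_def using R h gu by simp
next
  case (init3 r S u As)
  have T: "\<tau> = (StM IBox, None, All, Down, St IBox)" using tau init3 by simp
  have h: "s = StM IBox" "s' = St IBox" "\<xi>' = \<xi>" "\<rho>' = butlast \<rho>"
    using stp unfolding T step_def holds_def by (auto split: if_splits)
  have gu: "gupd g \<tau> \<rho> = g" "\<not> is_push_or_up (instr_of \<tau>)"
    unfolding T by (simp_all add: gupd_def instr_of_def is_push_or_up_def)
  note R = inv_down[OF inv[unfolded h(1)]]
  show ?thesis unfolding SP_def using R h gu by simp
next
  case (read r A us As i j \<sigma>)
  have T: "\<tau> = (St (IR r i (j - 1)), Some \<sigma>, All, IdI, St (IR r i j))" using tau read by simp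
  obtain j0 where j: "j = Suc j0" using read by (cases j) auto
  have h: "s = St (IR r i j0)" "s' = St (IR r i j)" "\<xi>' = \<xi>" "\<rho>' = \<rho>"
    using stp unfolding T step_def holds_def j by (auto split: if_splits)
  have vp: "valid_pos r i (Suc j0)" unfolding valid_pos_def using read j by simp
  have isT: "comp r ! (i-1) ! j0 = T \<sigma>" using read j by simp
  have gu: "gupd g \<tau> \<rho> = g\<lparr>gA := (gA g)(\<rho> := Some (i, Suc j0)), gP := (gP g)(\<rho> := insert (i, Suc j0) (gP g \<rho>))\<rparr>"
     "\<not> is_push_or_up (instr_of \<tau>)"
    unfolding T j by (simp_all add: gupd_def adv_def instr_of_def is_push_or_up_def)
  note R = inv_read[OF inv[unfolded h(1)] vp isT]
  show ?thesis unfolding SP_def using R h gu j by simp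
next
  case (call_push r A us As i j \<kappa> r' vs Bs m)
  have T: "\<tau> = (St (IR r i (j - 1)), None, All, Push \<kappa> (GI (IR r i j)), St (IR r' m 0))" using tau call_push by simp
  obtain j0 where j: "j = Suc j0" using call_push by (cases j) auto
  have h: "s = St (IR r i j0)" "s' = St (IR r' m 0)" "\<rho> @ [\<kappa>] \<notin> dom \<xi>" "\<xi>' = \<xi>(\<rho> @ [\<kappa>] \<mapsto> Lab (GI (IR r i j)))" "\<rho>' = \<rho> @ [\<kappa>]"
    using stp unfolding T step_def holds_def j by (auto split: if_splits)
  have vp: "valid_pos r i (Suc j0)" unfolding valid_pos_def using call_push j by simp
  have isV: "comp r ! (i-1) ! j0 = V \<kappa> m" using call_push j by simp
  have mk: "1 \<le> m" "m \<le> k" using call_push kM_len[OF kM, of r'] by auto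
  have gu: "gA (gupd g \<tau> \<rho>) = (gA g)(\<rho> := Some (i, Suc j0), \<rho> @ [\<kappa>] := Some (m, 0))"
     "gG (gupd g \<tau> \<rho>) = (gG g)(\<rho> @ [\<kappa>] := insert m (gG g (\<rho> @ [\<kappa>])))"
     "gP (gupd g \<tau> \<rho>) = (gP g)(\<rho> := insert (i, Suc j0) (gP g \<rho>))"
     "gR (gupd g \<tau> \<rho>) = (gR g)(\<rho> @ [\<kappa>] := r')"
    unfolding T j using isV by (simp_all add: gupd_def adv_def srcm_def tgt_rule_def instr_of_def Let_def)
  have sm: "srcm \<tau> = m" "is_push_or_up (instr_of \<tau>)" unfolding T j using isV
    by (simp_all add: srcm_def instr_of_def is_push_or_up_def)
  note R = inv_push[OF inv[unfolded h(1)] vp isV h(3) mk gu]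
  show ?thesis unfolding SP_def using R h sm gu(2) j by simp
next
  case (call_up r A us As i j \<kappa> r' vs Bs m)
  have T: "\<tau> = (St (IR r i (j - 1)), None, All, Up \<kappa>, StP (IR r i j))" using tau call_up by simp
  obtain j0 where j: "j = Suc j0" using call_up by (cases j) auto
  have h: "s = St (IR r i j0)" "s' = StP (IR r i j)" "\<rho> @ [\<kappa>] \<in> dom \<xi>" "\<xi>' = \<xi>" "\<rho>' = \<rho> @ [\<kappa>]"
    using stp unfolding T step_def holds_def j by (auto split: if_splits)
  have vp: "valid_pos r i (Suc j0)" unfolding valid_pos_def using call_up j by simp
  have isV: "comp r ! (i-1) ! j0 = V \<kappa> m" using call_up j by simp
  have mk: "1 \<le> m" "m \<le> k" using call_up kM_len[OF kM, of r'] by auto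
  have lin: "distinct (filter is_var (concat (comp r)))" using kM_lin[OF kM, of r] call_up by simp
  have gu: "gA (gupd g \<tau> \<rho>) = (gA g)(\<rho> := Some (i, Suc j0), \<rho> @ [\<kappa>] := Some (m, 0))"
     "gG (gupd g \<tau> \<rho>) = (gG g)(\<rho> @ [\<kappa>] := insert m (gG g (\<rho> @ [\<kappa>])))"
     "gP (gupd g \<tau> \<rho>) = (gP g)(\<rho> := insert (i, Suc j0) (gP g \<rho>))"
     "gR (gupd g \<tau> \<rho>) = gR g"
    unfolding T j using isV by (simp_all add: gupd_def adv_def srcm_def instr_of_def Let_def)
  have sm: "srcm \<tau> = m" "is_push_or_up (instr_of \<tau>)" unfolding T j using isV
    by (simp_all add: srcm_def instr_of_def is_push_or_up_def)
  note R = inv_up[OF inv[unfolded h(1)] vp isV h(3) mk lin gu]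
  show ?thesis unfolding SP_def using R h sm gu(2) j by simp
next
  case (call_set r A us As i j \<kappa> r' vs Bs m)
  have T: "\<tau> = (StP (IR r i j), None, Equals (GR r'), SetI (GI (IR r i j)), St (IR r' m 0))" using tau call_set by simp
  have h: "s = StP (IR r i j)" "s' = St (IR r' m 0)" "\<xi> \<rho> = Some (Lab (GR r'))" "\<xi>' = \<xi>(\<rho> \<mapsto> Lab (GI (IR r i j)))" "\<rho>' = \<rho>"
    using stp unfolding T step_def holds_def by (auto split: if_splits)
  have isV: "comp r ! (i-1) ! (j-1) = V \<kappa> m" using call_set by simp
  have gu: "gupd g \<tau> \<rho> = g" "\<not> is_push_or_up (instr_of \<tau>)"
    unfolding T by (simp_all add: gupd_def instr_of_def is_push_or_up_def)
  note R = inv_callset[OF inv[unfolded h(1)] h(3) isV]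
  show ?thesis unfolding SP_def using R h gu by simp
next
  case (ret_set r A us As i j \<kappa> r' vs Bs m)
  have T: "\<tau> = (St (IR r' m (length (vs ! (m - 1)))), None, Equals (GI (IR r i j)), SetI (GR r'), StM (IR r i j))" using tau ret_set by simp
  have h: "s = St (IR r' m (length (vs ! (m - 1))))" "s' = StM (IR r i j)" "\<xi> \<rho> = Some (Lab (GI (IR r i j)))"
     "\<xi>' = \<xi>(\<rho> \<mapsto> Lab (GR r'))" "\<rho>' = \<rho>"
    using stp unfolding T step_def holds_def by (auto split: if_splits)
  have gu: "gupd g \<tau> \<rho> = g\<lparr>gA := (gA g)(\<rho> := None)\<rparr>" "\<not> is_push_or_up (instr_of \<tau>)"
    unfolding T by (simp_all add: gupd_def instr_of_def is_push_or_up_def)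
  note R = inv_ret[OF inv[unfolded h(1)] h(3)]
  show ?thesis unfolding SP_def using R h gu by simp
next
  case (ret_down r A us As i j \<kappa> r' vs Bs m)
  have T: "\<tau> = (StM (IR r i j), None, All, Down, St (IR r i j))" using tau ret_down by simp
  have h: "s = StM (IR r i j)" "s' = St (IR r i j)" "\<xi>' = \<xi>" "\<rho>' = butlast \<rho>"
    using stp unfolding T step_def holds_def by (auto split: if_splits)
  have gu: "gupd g \<tau> \<rho> = g" "\<not> is_push_or_up (instr_of \<tau>)"
    unfolding T by (simp_all add: gupd_def instr_of_def is_push_or_up_def)
  note R = inv_down[OF inv[unfolded h(1)]]
  show ?thesis unfolding SP_def using R h gu by simp
qed
qed


lemma card_step:
  assumes fin: "finite Gs" and cnt: "card {i. i < n \<and> L i} = card Gs"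
    and upd: "Gs' = (if L n then insert m Gs else Gs)"
    and fr: "L n \<Longrightarrow> m \<notin> Gs"
  shows "card {i. i < Suc n \<and> L i} = card Gs'"
proof -
  have eq: "{i. i < Suc n \<and> L i} = {i. i < n \<and> L i} \<union> (if L n then {n} else {})"
    by (auto simp: less_Suc_eq)
  show ?thesis
  proof (cases "L n")
    case True
    have "card {i. i < Suc n \<and> L i} = Suc (card {i. i < n \<and> L i})"
      unfolding eq using True by simp
    then show ?thesis using upd True fr fin cnt by simp
  next
    case False
    then show ?thesis unfolding eq using upd cnt by simp
  qed
qed

theorem mainTheorem4:
  fixes G :: "('n, 't) pmcfg" and k :: nat
  assumes "is_pmcfg G" and "is_kMCFG k G"
  shows "k_restricted k (MG G)"
  unfolding k_restricted_def
proof (intro allI impI)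
  fix ts :: "(('n,'t) st, 't, ('n,'t) gam) transition list" and cs \<rho>0
  assume vr: "valid_run (MG G) ts cs"
  have len: "length cs = Suc (length ts)"
    and steps: "\<And>i. i < length ts \<Longrightarrow> ts ! i \<in> transM G \<and> step (ts ! i) (cs ! i) (cs ! Suc i)"
    and c0: "fst (cs ! 0) = St IBox" "fst (snd (cs ! 0)) = init_ts"
    using vr unfolding valid_run_def MG_def by auto
  define ptr where "ptr = (\<lambda>C :: ('n,'t) st \<times> ('n,'t) gam tstack \<times> 't list. snd (fst (snd C)))"
  define gsq where "gsq = rec_nat g0 (\<lambda>n g. gupd g (ts ! n) (ptr (cs ! n)))"
  have gs0: "gsq 0 = g0" unfolding gsq_def by simp
  have gsS: "\<And>n. gsq (Suc n) = gupd (gsq n) (ts ! n) (ptr (cs ! n))" unfolding gsq_def by simp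
  define L where "L = (\<lambda>\<rho> i. is_push_or_up (instr_of (ts ! i)) \<and> snd (fst (snd (cs ! Suc i))) = \<rho>)"
  have main: "\<And>n. n \<le> length ts \<Longrightarrow>
     Inv G k (fst (cs ! n)) (fst (fst (snd (cs ! n)))) (ptr (cs ! n)) (gsq n) \<and>
     (\<forall>\<rho>. card {i. i < n \<and> L \<rho> i} = card (gG (gsq n) \<rho>))"
  proof -
    fix n show "n \<le> length ts \<Longrightarrow> Inv G k (fst (cs ! n)) (fst (fst (snd (cs ! n)))) (ptr (cs ! n)) (gsq n) \<and>
     (\<forall>\<rho>. card {i. i < n \<and> L \<rho> i} = card (gG (gsq n) \<rho>))"
    proof (induction n)
      case 0
      obtain s0 \<xi>0 r0 w0 where C0: "cs ! 0 = (s0, (\<xi>0, r0), w0)" by (cases "cs ! 0") auto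
      have h: "s0 = St IBox" "\<xi>0 = Map.empty([] \<mapsto> At)" "r0 = []" using c0 C0 unfolding init_ts_def by auto
      have "Inv G k s0 \<xi>0 r0 (gsq 0)" unfolding h gs0 by (rule inv_init)
      then show ?case using C0 gs0 unfolding ptr_def by (simp add: g0_def)
    next
      case (Suc n)
      then have nl: "n < length ts" by simp
      have IH: "Inv G k (fst (cs ! n)) (fst (fst (snd (cs ! n)))) (ptr (cs ! n)) (gsq n)"
        "\<And>\<rho>. card {i. i < n \<and> L \<rho> i} = card (gG (gsq n) \<rho>)" using Suc nl by auto
      obtain s \<xi> \<rho> w where C: "cs ! n = (s, (\<xi>, \<rho>), w)" by (cases "cs ! n") auto
      obtain s' \<xi>' \<rho>' w' where C': "cs ! Suc n = (s', (\<xi>', \<rho>'), w')" by (cases "cs ! Suc n") auto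
      have st: "ts ! n \<in> transM G" "step (ts ! n) (s, (\<xi>, \<rho>), w) (s', (\<xi>', \<rho>'), w')"
        using steps[OF nl] C C' by auto
      have inv: "Inv G k s \<xi> \<rho> (gsq n)" using IH(1) C unfolding ptr_def by simp
      have SP: "SP G k (gsq n) (ts ! n) \<rho> s' \<xi>' \<rho>'" by (rule inv_step[OF assms(2) inv st])
      have gsn: "gsq (Suc n) = gupd (gsq n) (ts ! n) \<rho>" using gsS C unfolding ptr_def by simp
      have I': "Inv G k s' \<xi>' \<rho>' (gsq (Suc n))" using SP gsn unfolding SP_def by simp
      have cnt: "\<And>\<rho>0. card {i. i < Suc n \<and> L \<rho>0 i} = card (gG (gsq (Suc n)) \<rho>0)"
      proof -
        fix \<rho>0
        show "card {i. i < Suc n \<and> L \<rho>0 i} = card (gG (gsq (Suc n)) \<rho>0)"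
        proof (rule card_step[where Gs="gG (gsq n) \<rho>0" and m="srcm (ts ! n)"])
          show "finite (gG (gsq n) \<rho>0)" using InvD(6)[OF inv, of \<rho>0] finite_subset by blast
          show "card {i. i < n \<and> L \<rho>0 i} = card (gG (gsq n) \<rho>0)" by (rule IH(2))
          show "gG (gsq (Suc n)) \<rho>0 = (if L \<rho>0 n then insert (srcm (ts ! n)) (gG (gsq n) \<rho>0) else gG (gsq n) \<rho>0)"
            using SP gsn C' unfolding SP_def L_def by auto
          show "L \<rho>0 n \<Longrightarrow> srcm (ts ! n) \<notin> gG (gsq n) \<rho>0"
            using SP C' unfolding SP_def L_def by auto
        qed
      qed
      show ?case using I' cnt C' unfolding ptr_def by simp
    qed
  qed
  have fin: "Inv G k (fst (cs ! length ts)) (fst (fst (snd (cs ! length ts)))) (ptr (cs ! length ts)) (gsq (length ts))"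
    and cnt: "card {i. i < length ts \<and> L \<rho>0 i} = card (gG (gsq (length ts)) \<rho>0)"
    using main[of "length ts"] by auto
  have "card (gG (gsq (length ts)) \<rho>0) \<le> card {1..k}"
    using InvD(6)[OF fin, of \<rho>0] card_mono[of "{1..k}"] by blast
  then have "card {i. i < length ts \<and> L \<rho>0 i} \<le> k" using cnt by simp
  then show "card {i. i < length ts \<and> is_push_or_up (instr_of (ts ! i)) \<and> snd (fst (snd (cs ! Suc i))) = \<rho>0} \<le> k"
    unfolding L_def by simp
qed


end
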